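(* Let $f:\mathbb{R}^n\to\mathbb{R}^n$ be continuously differentiable and monotone, let $q:\mathbb{R}^n\to\mathbb{R}\cup\{+\infty\}$ be proper, convex and lower semicontinuous, and assume that either $f$ or $\partial q$ is strongly monotone. Let $x\in\mathbb{R}^n$ and $\gamma>0$ be arbitrary, put $u=u_\gamma(x)$, $\hat d=x+u$, $\hat d^*=-\gamma u-f(x)$, and let $G$ be any symmetric positive semidefinite matrix with $\|G\|\le1$ and $Gv^*\in D^*(\partial q)(\hat d,\hat d^* )((I-G)v^* )$ for all $v^*\in\mathbb{R}^n$. Then the linear system \[((I-G)\nabla f(x)+G)\Delta x=(\gamma(I-G)+G)u\] has a unique solution $\Delta x$ (so the new iterate $x+\Delta x$ is well defined), and \[\|\Delta x\|\le\Bigl(1+\frac1{\mu_f+\mu_q}\|\nabla f(x)-I\|\Bigr)\max\{1,\gamma\}\|u\|,\] where $\mu_f=\inf_{z\in\mathbb{R}^n}\mu_f(z)$ and $\mu_q=\inf_{d\in\mathrm{dom}\,\partial q}\mu_q(d)$.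
   Context: $u_\gamma(x)=\arg\min_u\bigl(\tfrac12\gamma\|u\|^2+\langle f(x),u\rangle+q(x+u)\bigr)$; then $\hat d^*\in\partial q(\hat d)$. A map $T$ is monotone if $\langle y_2-y_1,x_2-x_1\rangle\ge0$ for all $(x_i,y_i)\in\mathrm{gph}\, T$, strongly monotone if additionally $\langle y_2-y_1,x_2-x_1\rangle\ge\mu\|x_2-x_1\|^2$ for some $\mu>0$. $\mu_f(z)=\min\{\langle\nabla f(z)w,w\rangle:\|w\|=1\}$ and $\mu_q(d)=\lim_{\rho\downarrow0}\inf\{\langle d_1^*-d_2^*,d_1-d_2\rangle/\|d_1-d_2\|^2: d_i\in\mathcal{B}_\rho(d),(d_i,d_i^* )\in\mathrm{gph}\,\partial q, d_1\neq d_2\}$. $D^*$ denotes the limiting (Mordukhovich) coderivative: $D^*F(\bar x,\bar y)(v^* )=\{u^*:(u^*,-v^* )\in N_{\mathrm{gph}\, F}(\bar x,\bar y)\}$ with $N$ the limiting normal cone (limits of regular normals, the regular normal cone being the polar of the contingent cone). Norms are Euclidean/spectral. *)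

theory Defs
  imports "HOL-Analysis.Analysis"
begin

definition proper_fun :: "('a \<Rightarrow> ereal) \<Rightarrow> bool" where
  "proper_fun q \<longleftrightarrow> (\<forall>x. q x \<noteq> -\<infinity>) \<and> (\<exists>x. q x < \<infinity>)"

definition ereal_convex :: "('a::real_vector \<Rightarrow> ereal) \<Rightarrow> bool" where
  "ereal_convex q \<longleftrightarrow> (\<forall>x y t. 0 < t \<and> t < 1 \<longrightarrow>
      q ((1 - t) *\<^sub>R x + t *\<^sub>R y) \<le> ereal (1 - t) * q x + ereal t * q y)"

definition lsc_fun :: "('a::topological_space \<Rightarrow> ereal) \<Rightarrow> bool" where
  "lsc_fun q \<longleftrightarrow> (\<forall>x. q x \<le> Liminf (at x) q)"

definition subdiff :: "('a::real_inner \<Rightarrow> ereal) \<Rightarrow> 'a \<Rightarrow> 'a set" where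
  "subdiff q x = {s. \<bar>q x\<bar> \<noteq> \<infinity> \<and> (\<forall>y. q y \<ge> q x + ereal (inner s (y - x)))}"

definition gph :: "('a \<Rightarrow> 'b set) \<Rightarrow> ('a \<times> 'b) set" where
  "gph F = {(x, y). y \<in> F x}"

definition dom_sv :: "('a \<Rightarrow> 'b set) \<Rightarrow> 'a set" where
  "dom_sv F = {x. F x \<noteq> {}}"

definition monotone_map :: "('a::real_inner \<Rightarrow> 'a set) \<Rightarrow> bool" where
  "monotone_map T \<longleftrightarrow> (\<forall>x1 y1 x2 y2. y1 \<in> T x1 \<and> y2 \<in> T x2 \<longrightarrow> inner (y2 - y1) (x2 - x1) \<ge> 0)"

definition strongly_monotone_map :: "('a::real_inner \<Rightarrow> 'a set) \<Rightarrow> bool" where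
  "strongly_monotone_map T \<longleftrightarrow> (\<exists>\<mu>>0. \<forall>x1 y1 x2 y2. y1 \<in> T x1 \<and> y2 \<in> T x2 \<longrightarrow>
      inner (y2 - y1) (x2 - x1) \<ge> \<mu> * (norm (x2 - x1))\<^sup>2)"

definition contingent_cone :: "'a::real_normed_vector set \<Rightarrow> 'a \<Rightarrow> 'a set" where
  "contingent_cone A z = {t. \<exists>\<tau> tk. (\<forall>k. \<tau> k > 0) \<and> \<tau> \<longlonglongrightarrow> 0 \<and> tk \<longlonglongrightarrow> t \<and>
      (\<forall>k. z + \<tau> k *\<^sub>R tk k \<in> A)}"

definition regular_normal_cone :: "'a::real_inner set \<Rightarrow> 'a \<Rightarrow> 'a set" where
  "regular_normal_cone A z = {w. \<forall>t\<in>contingent_cone A z. inner w t \<le> 0}"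

definition limiting_normal_cone :: "'a::real_inner set \<Rightarrow> 'a \<Rightarrow> 'a set" where
  "limiting_normal_cone A z = {w. \<exists>zk wk. (\<forall>k. zk k \<in> A \<and> wk k \<in> regular_normal_cone A (zk k)) \<and>
      zk \<longlonglongrightarrow> z \<and> wk \<longlonglongrightarrow> w}"

definition coderivative :: "('a::real_inner \<Rightarrow> 'b::real_inner set) \<Rightarrow> 'a \<Rightarrow> 'b \<Rightarrow> 'b \<Rightarrow> 'a set" where
  "coderivative F x y v = {u. (u, - v) \<in> limiting_normal_cone (gph F) (x, y)}"

definition u_gamma :: "('a::real_inner \<Rightarrow> 'a) \<Rightarrow> ('a \<Rightarrow> ereal) \<Rightarrow> real \<Rightarrow> 'a \<Rightarrow> 'a" where
  "u_gamma f q \<gamma> x = (THE u. \<forall>v.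
      ereal (\<gamma> / 2 * (norm u)\<^sup>2 + inner (f x) u) + q (x + u)
      \<le> ereal (\<gamma> / 2 * (norm v)\<^sup>2 + inner (f x) v) + q (x + v))"

text \<open>mu_f(z) for the Jacobian matrix J z = \<nabla>f(z), and mu_q(d).\<close>
definition mu_f_at :: "real^'n^'n \<Rightarrow> real" where
  "mu_f_at A = Inf {inner (A *v w) w | w. norm w = 1}"

definition mu_q_at :: "('a::real_inner \<Rightarrow> ereal) \<Rightarrow> 'a \<Rightarrow> ereal" where
  "mu_q_at q d = Lim (at_right 0) (\<lambda>\<rho>::real. INF p \<in> {(d1, d1s, d2, d2s). d1 \<in> ball d \<rho> \<and> d2 \<in> ball d \<rho> \<and>
        d1s \<in> subdiff q d1 \<and> d2s \<in> subdiff q d2 \<and> d1 \<noteq> d2}.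
      (case p of (d1, d1s, d2, d2s) \<Rightarrow> ereal (inner (d1s - d2s) (d1 - d2) / (norm (d1 - d2))\<^sup>2)))"

end

theory Submission
  imports Defs
begin

lemma subdiff_finite: "s \<in> subdiff q d \<Longrightarrow> \<bar>q d\<bar> \<noteq> \<infinity>"
  by (simp add: subdiff_def)

lemma subdiff_ineq: "s \<in> subdiff q d \<Longrightarrow> q y \<ge> q d + ereal (inner s (y - d))"
  by (simp add: subdiff_def)

lemma subdiff_mono:
  assumes "s1 \<in> subdiff q d1" "s2 \<in> subdiff q d2"
  shows "inner (s2 - s1) (d2 - d1) \<ge> 0"
proof -
  obtain a where a: "q d1 = ereal a" using subdiff_finite[OF assms(1)] by (cases "q d1") auto
  obtain b where b: "q d2 = ereal b" using subdiff_finite[OF assms(2)] by (cases "q d2") auto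
  have 1: "b \<ge> a + inner s1 (d2 - d1)" using subdiff_ineq[OF assms(1), of d2] a b by simp
  have 2: "a \<ge> b + inner s2 (d1 - d2)" using subdiff_ineq[OF assms(2), of d1] a b by simp
  have "inner s2 (d1 - d2) = - inner s2 (d2 - d1)" by (simp add: inner_diff_right)
  then show ?thesis using 1 2 by (simp add: inner_diff_left)
qed

lemma lsc_nhds:
  assumes "lsc_fun q" "ereal r < q x"
  shows "\<exists>\<delta>>0. \<forall>z. dist z x < \<delta> \<longrightarrow> ereal r < q z"
proof -
  have "ereal r < Liminf (at x) q" using assms unfolding lsc_fun_def
    using order_less_le_trans by blast
  then have "eventually (\<lambda>z. ereal r < q z) (at x)" by (rule less_LiminfD)
  then obtain \<delta> where "\<delta> > 0" "\<forall>z. z \<noteq> x \<and> dist z x < \<delta> \<longrightarrow> ereal r < q z"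
    unfolding eventually_at by auto
  then show ?thesis using assms(2) by metis
qed

lemma lsc_seq:
  fixes q :: "'a::metric_space \<Rightarrow> ereal"
  assumes "lsc_fun q" "y \<longlonglongrightarrow> x" "ereal r < q x"
  shows "eventually (\<lambda>k. ereal r < q (y k)) sequentially"
proof -
  obtain \<delta> where d: "\<delta> > 0" "\<forall>z. dist z x < \<delta> \<longrightarrow> ereal r < q z"
    using lsc_nhds[OF assms(1,3)] by blast
  have "eventually (\<lambda>k. dist (y k) x < \<delta>) sequentially"
    using assms(2) d(1) by (rule tendstoD)
  then show ?thesis by eventually_elim (use d in auto)
qed


lemma ereal_le_from_reals:
  fixes y V :: ereal
  assumes "\<And>c. V < ereal c \<Longrightarrow> y \<le> ereal c"
  shows "y \<le> V"
proof (rule ccontr)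
  assume "\<not> y \<le> V"
  then have "V < y" by simp
  then obtain c where "V < ereal c" "ereal c < y" using ereal_dense2 by blast
  with assms[of c] show False by (meson not_le)
qed

lemma compact_min_ereal:
  fixes g :: "'a::metric_space \<Rightarrow> ereal"
  assumes K: "compact K" "K \<noteq> {}"
    and cl: "\<And>c. closed {y \<in> K. g y \<le> ereal c}"
  shows "\<exists>y\<in>K. \<forall>y'\<in>K. g y \<le> g y'"
proof -
  define V where "V = (INF y\<in>K. g y)"
  have "K \<inter> \<Inter> ((\<lambda>c. {y \<in> K. g y \<le> ereal c}) ` {c. V < ereal c}) \<noteq> {}"
  proof (rule compact_imp_fip_image[OF K(1)])
    fix i show "closed {y \<in> K. g y \<le> ereal i}" by (rule cl)
  next
    fix I' assume I': "finite I'" "I' \<subseteq> {c. V < ereal c}"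
    show "K \<inter> \<Inter> ((\<lambda>c. {y \<in> K. g y \<le> ereal c}) ` I') \<noteq> {}"
    proof (cases "I' = {}")
      case True then show ?thesis using K by simp
    next
      case False
      define c0 where "c0 = Min I'"
      have "c0 \<in> I'" unfolding c0_def using Min_in[OF I'(1) False] .
      then have "V < ereal c0" using I'(2) by blast
      then obtain y where y: "y \<in> K" "g y < ereal c0" unfolding V_def by (meson INF_less_iff)
      have "\<And>c. c \<in> I' \<Longrightarrow> c0 \<le> c" unfolding c0_def using I'(1) by (rule Min_le)
      then have "y \<in> K \<inter> \<Inter> ((\<lambda>c. {y \<in> K. g y \<le> ereal c}) ` I')"
      proof -
        have "g y \<le> ereal c" if "c \<in> I'" for c
        proof -
          have "ereal c0 \<le> ereal c" using \<open>\<And>c. c \<in> I' \<Longrightarrow> c0 \<le> c\<close> that by simp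
          then show ?thesis by (rule order.trans[OF less_imp_le[OF y(2)]])
        qed
        then show ?thesis using y(1) by blast
      qed
      then show ?thesis by blast
    qed
  qed
  then obtain y where y: "y \<in> K" "\<And>c. V < ereal c \<Longrightarrow> g y \<le> ereal c" by blast
  have "g y \<le> V" using y(2) by (rule ereal_le_from_reals)
  moreover have "\<forall>y'\<in>K. V \<le> g y'" unfolding V_def by (simp add: INF_lower)
  ultimately show ?thesis using y(1) by (blast intro: order.trans)
qed

lemma sublevel_closed:
  fixes q :: "'a::metric_space \<Rightarrow> ereal"
  assumes lsc: "lsc_fun q" and h: "continuous_on UNIV h" and K: "closed K"
  shows "closed {y \<in> K. q y + ereal (h y) \<le> ereal c}"
  unfolding closed_sequential_limits
proof (intro allI impI, elim conjE)
  fix x l assume x: "\<forall>n. x n \<in> {y \<in> K. q y + ereal (h y) \<le> ereal c}" and l: "x \<longlonglongrightarrow> l"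
  have lK: "l \<in> K" using x l K closed_sequentially by blast
  show "l \<in> {y \<in> K. q y + ereal (h y) \<le> ereal c}"
  proof (rule ccontr)
    assume "l \<notin> {y \<in> K. q y + ereal (h y) \<le> ereal c}"
    then have "ereal c < q l + ereal (h l)" using lK by auto
    then have "ereal (c - h l) < q l" by (cases "q l") auto
    then obtain r where r: "ereal (c - h l) < ereal r" "ereal r < q l" using ereal_dense2 by blast
    have e1: "eventually (\<lambda>k. ereal r < q (x k)) sequentially" by (rule lsc_seq[OF lsc l r(2)])
    have "(\<lambda>k. h (x k)) \<longlonglongrightarrow> h l"
      using h l by (metis continuous_on_tendsto_compose UNIV_I eventually_sequentially)
    moreover have "h l > c - r" using r(1) by simp
    ultimately have e2: "eventually (\<lambda>k. h (x k) > c - r) sequentially" by (rule order_tendstoD)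
    from e1 e2 have "eventually (\<lambda>k. False) sequentially"
    proof eventually_elim
      case (elim k)
      then have "ereal c < q (x k) + ereal (h (x k))" by (cases "q (x k)") auto
      then show False using x by (metis (no_types, lifting) mem_Collect_eq not_le)
    qed
    then show False by simp
  qed
qed


lemma norm_add_scale_sq:
  fixes a b :: "'a::real_inner"
  shows "(norm (a + t *\<^sub>R b))\<^sup>2 = (norm a)\<^sup>2 + 2 * t * inner a b + t\<^sup>2 * (norm b)\<^sup>2"
proof -
  have "(norm (a + t *\<^sub>R b))\<^sup>2 = inner (a + t *\<^sub>R b) (a + t *\<^sub>R b)" by (rule power2_norm_eq_inner)
  also have "\<dots> = inner a a + 2 * t * inner a b + t\<^sup>2 * inner b b"
    by (simp add: inner_add_left inner_add_right inner_commute power2_eq_square algebra_simps)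
  finally show ?thesis by (simp add: power2_norm_eq_inner)
qed

lemma convex_real:
  assumes "ereal_convex q" "0 < t" "t < 1" "q x = ereal a" "q y = ereal b"
  shows "q ((1 - t) *\<^sub>R x + t *\<^sub>R y) \<le> ereal ((1 - t) * a + t * b)"
  using assms unfolding ereal_convex_def by (metis times_ereal.simps(1) plus_ereal.simps(1))

lemma prox_exists:
  fixes q :: "'a::euclidean_space \<Rightarrow> ereal"
  assumes pr: "proper_fun q" and cv: "ereal_convex q" and ls: "lsc_fun q"
  shows "\<exists>d. z - d \<in> subdiff q d"
proof -
  have nm: "\<And>y. q y \<noteq> -\<infinity>" using pr unfolding proper_fun_def by auto
  obtain y0 where "q y0 < \<infinity>" using pr unfolding proper_fun_def by auto
  then obtain q0 where q0: "q y0 = ereal q0" using nm[of y0] by (cases "q y0") auto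
  have c0: "continuous_on UNIV (\<lambda>y::'a. 0::real)" by simp
  obtain y1 where y1: "y1 \<in> cball y0 1" "\<forall>y'\<in>cball y0 1. q y1 + ereal 0 \<le> q y' + ereal 0"
    using compact_min_ereal[of "cball y0 1" "\<lambda>y. q y + ereal 0"]
      sublevel_closed[OF ls c0 closed_cball] by auto
  have y1': "\<And>y'. y' \<in> cball y0 1 \<Longrightarrow> q y1 \<le> q y'" using y1(2) by simp
  have "q y1 \<le> ereal q0" using y1'[of y0] q0 by simp
  then obtain L where L: "q y1 = ereal L" "L \<le> q0" using nm[of y1] by (cases "q y1") auto
  define D where "D = q0 - L"
  have D0: "D \<ge> 0" using L unfolding D_def by simp
  have lower: "ereal (q0 - D - D * dist y y0) \<le> q y" for y
  proof (cases "dist y y0 \<le> 1")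
    case True
    then have "ereal L \<le> q y" using y1'[of y] L by (simp add: dist_commute)
    moreover have "q0 - D - D * dist y y0 \<le> L" using D0 unfolding D_def
      by (simp add: dist_nz mult_nonneg_nonneg)
    ultimately show ?thesis by (meson ereal_less_eq(3) order_trans)
  next
    case False
    show ?thesis
    proof (cases "q y")
      case (real Q)
      define \<rho> where "\<rho> = dist y y0"
      define t where "t = 1 / \<rho>"
      have \<rho>1: "\<rho> > 1" using False unfolding \<rho>_def by simp
      have t: "0 < t" "t < 1" using \<rho>1 unfolding t_def by auto
      define y' where "y' = (1 - t) *\<^sub>R y0 + t *\<^sub>R y"
      have "y' - y0 = t *\<^sub>R (y - y0)" unfolding y'_def by (simp add: algebra_simps)
      then have "dist y' y0 = t * \<rho>" unfolding \<rho>_def using t by (simp add: dist_norm)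
      then have "dist y0 y' = 1" using \<rho>1 unfolding t_def by (simp add: dist_commute)
      then have "ereal L \<le> q y'" using y1'[of y'] L by simp
      also have "q y' \<le> ereal ((1 - t) * q0 + t * Q)" unfolding y'_def
        by (rule convex_real[OF cv t q0 real])
      finally have "L \<le> (1 - t) * q0 + t * Q" by simp
      then have "\<rho> * L \<le> \<rho> * ((1 - t) * q0 + t * Q)" using \<rho>1 by simp
      also have "\<dots> = (\<rho> - 1) * q0 + Q" unfolding t_def using \<rho>1 by (simp add: algebra_simps)
      finally have "q0 - D * \<rho> \<le> Q" unfolding D_def by (simp add: algebra_simps)
      then show ?thesis using real D0 unfolding \<rho>_def by simp
    qed (use nm in auto)
  qed
  define h where "h y = (norm (y - z))\<^sup>2 / 2" for y
  have hc: "continuous_on UNIV h" unfolding h_def by (intro continuous_intros) simp_all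
  define e where "e = norm (z - y0)"
  define C where "C = D + D * e + e\<^sup>2 / 2 + 1"
  define R where "R = 2 * (D + C) + 1"
  have C1: "C \<ge> 1" using D0 unfolding C_def e_def by simp
  have e0: "e \<ge> 0" unfolding e_def by simp
  have "0 \<le> (e - 1)\<^sup>2" by simp
  moreover have "(e - 1)\<^sup>2 = e\<^sup>2 - 2 * e + 1" by (simp add: power2_eq_square algebra_simps)
  ultimately have "e \<le> e\<^sup>2 / 2 + 1 / 2" by linarith
  moreover have "D * e \<ge> 0" using D0 e0 by simp
  ultimately have eC: "e \<le> C" unfolding C_def using D0 by linarith
  have y0R: "y0 \<in> cball z R" unfolding R_def using eC D0 C1 by (simp add: e_def dist_norm)
  have "\<exists>d\<in>cball z R. \<forall>y'\<in>cball z R. q d + ereal (h d) \<le> q y' + ereal (h y')"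
    by (rule compact_min_ereal[OF compact_cball _ sublevel_closed[OF ls hc closed_cball]])
      (use y0R in blast)
  then obtain d where d: "d \<in> cball z R" "\<forall>y'\<in>cball z R. q d + ereal (h d) \<le> q y' + ereal (h y')"
    by blast
  have glob: "q d + ereal (h d) \<le> q y + ereal (h y)" for y
  proof (cases "y \<in> cball z R")
    case True then show ?thesis using d by auto
  next
    case False
    define r where "r = norm (y - z)"
    have rR: "r > R" using False unfolding r_def by (simp add: dist_norm norm_minus_commute)
    have dy: "dist y y0 \<le> r + e" unfolding r_def e_def dist_norm
      using norm_triangle_ineq[of "y - z" "z - y0"] by simp
    have hy: "h y = r\<^sup>2 / 2" unfolding h_def r_def by simp
    have hy0: "h y0 = e\<^sup>2 / 2" unfolding h_def e_def by (simp add: norm_minus_commute)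
    have r1: "r \<ge> 1" using rR C1 D0 unfolding R_def by (simp add: algebra_simps)
    have "r / 2 - D > C" using rR unfolding R_def by (simp add: algebra_simps)
    then have "r * (r / 2 - D) > r * C" using r1 by (intro mult_strict_left_mono) auto
    moreover have "r * C \<ge> 1 * C" using r1 C1 by (intro mult_right_mono) auto
    moreover have "r * (r / 2 - D) = r\<^sup>2 / 2 - D * r" by (simp add: power2_eq_square algebra_simps)
    moreover have "D * (r + e) = D * r + D * e" by (simp add: algebra_simps)
    ultimately have key: "q0 - D - D * (r + e) + r\<^sup>2 / 2 > q0 + e\<^sup>2 / 2"
      using C_def by linarith
    have "q0 - D - D * dist y y0 \<ge> q0 - D - D * (r + e)" using dy D0 by (simp add: mult_left_mono)
    then have "ereal (q0 - D - D * (r + e)) \<le> q y" using lower[of y] by (meson ereal_less_eq(3) order_trans)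
    then have "ereal (q0 - D - D * (r + e) + r\<^sup>2 / 2) \<le> q y + ereal (h y)"
      unfolding hy by (cases "q y") auto
    moreover have "q d + ereal (h d) \<le> ereal (q0 + e\<^sup>2 / 2)" using d(2)[rule_format, OF y0R] q0 hy0 by simp
    ultimately show ?thesis using key
      by (meson ereal_less_eq(3) less_imp_le order_trans)
  qed
  have "q d + ereal (h d) \<le> ereal (q0 + h y0)" using glob[of y0] q0 by simp
  then have "q d < \<infinity>" by (cases "q d") auto
  then obtain Qd where Qd: "q d = ereal Qd" using nm[of d] by (cases "q d") auto
  have sub: "q y \<ge> q d + ereal (inner (z - d) (y - d))" for y
  proof (cases "q y")
    case (real Q)
    have "Qd + inner (z - d) (y - d) \<le> Q"
    proof (rule field_le_epsilon)
      fix \<epsilon> :: real assume \<epsilon>: "\<epsilon> > 0"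
      define t where "t = min (1/2) (\<epsilon> / ((norm (y - d))\<^sup>2 + 1))"
      have np: "(norm (y - d))\<^sup>2 + 1 > 0" by (simp add: add_nonneg_pos)
      then have "\<epsilon> / ((norm (y - d))\<^sup>2 + 1) > 0" using \<epsilon> by simp
      then have t: "0 < t" "t < 1" unfolding t_def by auto
      have tb: "t * (norm (y - d))\<^sup>2 \<le> \<epsilon>"
      proof -
        have "t \<le> \<epsilon> / ((norm (y - d))\<^sup>2 + 1)" unfolding t_def by simp
        then have "t * ((norm (y - d))\<^sup>2 + 1) \<le> \<epsilon>" using np by (simp add: pos_le_divide_eq)
        then show ?thesis using t by (simp add: algebra_simps)
      qed
      define yt where "yt = (1 - t) *\<^sub>R d + t *\<^sub>R y"
      have "q yt \<le> ereal ((1 - t) * Qd + t * Q)" unfolding yt_def by (rule convex_real[OF cv t Qd real])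
      then have "q yt + ereal (h yt) \<le> ereal ((1 - t) * Qd + t * Q + h yt)" by (cases "q yt") auto
      with glob[of yt] have "Qd + h d \<le> (1 - t) * Qd + t * Q + h yt" using Qd
        by (metis ereal_less_eq(3) order_trans plus_ereal.simps(1))
      moreover have "h yt = h d + t * inner (d - z) (y - d) + t\<^sup>2 * (norm (y - d))\<^sup>2 / 2"
      proof -
        have e1: "yt - z = (d - z) + t *\<^sub>R (y - d)" unfolding yt_def by (simp add: algebra_simps)
        have g: "\<And>A B C::real. (A + 2 * t * B + t\<^sup>2 * C) / 2 = A / 2 + t * B + t\<^sup>2 * C / 2"
          by (simp add: field_simps)
        show ?thesis unfolding h_def e1 norm_add_scale_sq by (rule g)
      qed
      ultimately have "t * Qd \<le> t * Q + t * inner (d - z) (y - d) + t\<^sup>2 * (norm (y - d))\<^sup>2 / 2"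
        by (simp add: algebra_simps)
      then have "t * Qd \<le> t * (Q + inner (d - z) (y - d) + t * (norm (y - d))\<^sup>2 / 2)"
        by (simp add: algebra_simps power2_eq_square)
      then have "Qd \<le> Q + inner (d - z) (y - d) + t * (norm (y - d))\<^sup>2 / 2" using t by simp
      moreover have "inner (d - z) (y - d) = - inner (z - d) (y - d)" by (simp add: inner_diff_left)
      ultimately show "Qd + inner (z - d) (y - d) \<le> Q + \<epsilon>" using tb \<epsilon> by simp
    qed
    then show ?thesis using real Qd by simp
  qed (use nm in auto)
  have "z - d \<in> subdiff q d" unfolding subdiff_def using sub Qd by simp
  then show ?thesis by blast
qed


lemma alg_K: fixes xt bt ab tt bb m :: real
 assumes "xt + (1+2*m)*bt - tt \<ge> m*tt" "xt + (ab + (1+2*m)*bb) - bt \<le> 0" "0 \<le> tt - 2*bt + bb" "0 \<le> m"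
 shows "-ab \<ge> m*bb"
proof -
  have "0 \<le> m*(tt - 2*bt + bb)" using assms by simp
  then show ?thesis using assms by (simp add: algebra_simps)
qed

lemma reg_normal_ineq:
  fixes q :: "'a::euclidean_space \<Rightarrow> ereal"
  assumes pr: "proper_fun q" and cv: "ereal_convex q" and ls: "lsc_fun q"
    and s0: "s0 \<in> subdiff q d0" and \<rho>: "\<rho> > 0" and m: "m \<ge> 0"
    and loc: "\<And>d s. d \<in> ball d0 \<rho> \<Longrightarrow> s \<in> subdiff q d \<Longrightarrow> inner (s - s0) (d - d0) \<ge> m * (norm (d - d0))\<^sup>2"
    and nrm: "(a, \<beta>) \<in> regular_normal_cone (gph (subdiff q)) (d0, s0)"
  shows "inner a (- \<beta>) \<ge> m * (norm \<beta>)\<^sup>2"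
proof -
  define w where "w = a + (1 + 2 * m) *\<^sub>R \<beta>"
  define z0 where "z0 = d0 + s0"
  define \<tau> where "\<tau> k = 1 / (real k + 1)" for k :: nat
  have \<tau>0: "\<tau> k > 0" for k unfolding \<tau>_def by simp
  have \<tau>lim: "\<tau> \<longlonglongrightarrow> 0" unfolding \<tau>_def using LIMSEQ_inverse_real_of_nat
    by (simp add: inverse_eq_divide add.commute)
  have "\<forall>k. \<exists>d. (z0 + \<tau> k *\<^sub>R w) - d \<in> subdiff q d" using prox_exists[OF pr cv ls] by blast
  then obtain dk where dk: "\<And>k. (z0 + \<tau> k *\<^sub>R w) - dk k \<in> subdiff q (dk k)" by metis
  define sk where "sk k = (z0 + \<tau> k *\<^sub>R w) - dk k" for k
  have sk: "sk k \<in> subdiff q (dk k)" for k unfolding sk_def by (rule dk)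
  define T where "T k = (1 / \<tau> k) *\<^sub>R (dk k - d0)" for k
  have dkT: "dk k - d0 = \<tau> k *\<^sub>R T k" for k unfolding T_def using \<tau>0[of k] by simp
  have skT: "sk k - s0 = \<tau> k *\<^sub>R (w - T k)" for k
    unfolding sk_def z0_def using dkT[of k] by (simp add: algebra_simps)
  have Tb: "norm (T k) \<le> norm w" for k
  proof -
    have "0 \<le> inner (sk k - s0) (dk k - d0)" using subdiff_mono[OF s0 sk[of k]] .
    also have "\<dots> = (\<tau> k)\<^sup>2 * (inner w (T k) - inner (T k) (T k))"
      unfolding skT dkT by (simp add: inner_diff_left power2_eq_square)
    finally have "inner (T k) (T k) \<le> inner w (T k)" using \<tau>0[of k]
      by (simp add: zero_le_mult_iff)
    also have "\<dots> \<le> norm w * norm (T k)" by (rule Cauchy_Schwarz_ineq2[THEN order_trans[OF abs_ge_self]])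
    finally have "norm (T k) * norm (T k) \<le> norm w * norm (T k)" by (simp add: norm_eq_sqrt_inner[symmetric] power2_eq_square[symmetric] power2_norm_eq_inner[symmetric])
    then show ?thesis by (cases "norm (T k) = 0") auto
  qed
  have "seq_compact (cball (0::'a) (norm w))" by (rule compact_imp_seq_compact[OF compact_cball])
  then obtain t r where r: "strict_mono r" "(T \<circ> r) \<longlonglongrightarrow> t"
    using Tb by (elim seq_compactE[of _ T]) auto
  have Trt: "(\<lambda>k. T (r k)) \<longlonglongrightarrow> t" using r(2) by (simp add: comp_def)
  have \<tau>r: "(\<lambda>k. \<tau> (r k)) \<longlonglongrightarrow> 0" using LIMSEQ_subseq_LIMSEQ[OF \<tau>lim r(1)] by (simp add: comp_def)
  have cc: "(t, w - t) \<in> contingent_cone (gph (subdiff q)) (d0, s0)"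
    unfolding contingent_cone_def
  proof (intro CollectI exI conjI allI)
    fix k
    show "\<tau> (r k) > 0" by (rule \<tau>0)
    have "(d0, s0) + \<tau> (r k) *\<^sub>R (T (r k), w - T (r k)) = (dk (r k), sk (r k))"
      using dkT[of "r k"] skT[of "r k"] by (simp add: algebra_simps)
    then show "(d0, s0) + \<tau> (r k) *\<^sub>R (T (r k), w - T (r k)) \<in> gph (subdiff q)"
      using sk[of "r k"] unfolding gph_def by simp
  next
    show "(\<lambda>k. \<tau> (r k)) \<longlonglongrightarrow> 0" by (rule \<tau>r)
    show "(\<lambda>k. (T (r k), w - T (r k))) \<longlonglongrightarrow> (t, w - t)"
      by (intro tendsto_Pair tendsto_diff tendsto_const Trt)
  qed
  have H1: "inner a t + inner \<beta> (w - t) \<le> 0"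
    using nrm cc unfolding regular_normal_cone_def by (auto simp: inner_Pair)
  have ev: "eventually (\<lambda>k. \<tau> (r k) * norm w < \<rho>) sequentially"
    using tendsto_mult_left_zero[OF \<tau>r, of "norm w"] \<rho> by (rule order_tendstoD(2))
  have H2: "inner (w - t) t - m * (norm t)\<^sup>2 \<ge> 0"
  proof (rule tendsto_lowerbound)
    show "((\<lambda>k. inner (w - T (r k)) (T (r k)) - m * (norm (T (r k)))\<^sup>2) \<longlongrightarrow>
        inner (w - t) t - m * (norm t)\<^sup>2) sequentially"
      by (intro tendsto_intros Trt)
    show "sequentially \<noteq> bot" by simp
    show "eventually (\<lambda>k. 0 \<le> inner (w - T (r k)) (T (r k)) - m * (norm (T (r k)))\<^sup>2) sequentially"
      using ev
    proof eventually_elim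
      case (elim k)
      have "norm (dk (r k) - d0) \<le> \<tau> (r k) * norm w"
        using dkT[of "r k"] Tb[of "r k"] \<tau>0[of "r k"] by (simp add: mult_left_mono)
      then have "dk (r k) \<in> ball d0 \<rho>" using elim by (simp add: dist_norm norm_minus_commute)
      from loc[OF this sk[of "r k"]]
      have "m * (norm (dk (r k) - d0))\<^sup>2 \<le> inner (sk (r k) - s0) (dk (r k) - d0)" .
      then have "(\<tau> (r k))\<^sup>2 * (m * (norm (T (r k)))\<^sup>2) \<le> (\<tau> (r k))\<^sup>2 * inner (w - T (r k)) (T (r k))"
        unfolding skT dkT using \<tau>0[of "r k"] by (simp add: power2_eq_square algebra_simps)
      then have "m * (norm (T (r k)))\<^sup>2 \<le> inner (w - T (r k)) (T (r k))"
        using \<tau>0[of "r k"] by simp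
      then show ?case by simp
    qed
  qed
  have e1: "inner (w - t) t = inner a t + (1 + 2*m) * inner \<beta> t - inner t t"
    unfolding w_def by (simp add: inner_diff_left inner_add_left)
  have e2: "inner \<beta> (w - t) = inner \<beta> a + (1 + 2*m) * inner \<beta> \<beta> - inner \<beta> t"
    unfolding w_def by (simp add: inner_diff_right inner_add_right)
  have e3: "0 \<le> inner t t - 2 * inner \<beta> t + inner \<beta> \<beta>"
  proof -
    have "0 \<le> inner (t - \<beta>) (t - \<beta>)" by simp
    then show ?thesis by (simp add: inner_diff_left inner_diff_right inner_commute)
  qed
  have "- inner \<beta> a \<ge> m * inner \<beta> \<beta>"
  proof (rule alg_K[OF _ _ e3 m])
    show "inner a t + (1 + 2 * m) * inner \<beta> t - inner t t \<ge> m * inner t t"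
      using H2 e1 by (simp add: power2_norm_eq_inner)
    show "inner a t + (inner \<beta> a + (1 + 2 * m) * inner \<beta> \<beta>) - inner \<beta> t \<le> 0"
      using H1 e2 by simp
  qed
  then show ?thesis by (simp add: power2_norm_eq_inner inner_commute)
qed


lemma antitone_tendsto_SUP:
  fixes g :: "real \<Rightarrow> ereal"
  assumes anti: "\<And>x y. 0 < x \<Longrightarrow> x \<le> y \<Longrightarrow> g y \<le> g x"
  shows "(g \<longlongrightarrow> (SUP \<rho>\<in>{0<..}. g \<rho>)) (at_right 0)"
proof (rule order_tendstoI)
  fix a assume "a < (SUP \<rho>\<in>{0<..}. g \<rho>)"
  then obtain \<rho>0 where \<rho>0: "\<rho>0 > 0" "a < g \<rho>0" by (auto simp: less_SUP_iff)
  show "eventually (\<lambda>x. a < g x) (at_right 0)"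
    unfolding eventually_at_right[OF \<rho>0(1)]
    using \<rho>0 anti by (meson less_le_trans less_imp_le)
next
  fix a assume a: "(SUP \<rho>\<in>{0<..}. g \<rho>) < a"
  have "eventually (\<lambda>x. x > 0) (at_right (0::real))" by (simp add: eventually_at_right_less)
  then show "eventually (\<lambda>x. g x < a) (at_right 0)"
  proof eventually_elim
    case (elim x)
    then have "g x \<le> (SUP \<rho>\<in>{0<..}. g \<rho>)" by (intro SUP_upper) auto
    then show ?case using a by simp
  qed
qed

definition gq :: "('a::real_inner \<Rightarrow> ereal) \<Rightarrow> 'a \<Rightarrow> real \<Rightarrow> ereal" where
  "gq q d \<rho> = (INF p \<in> {(d1, d1s, d2, d2s). d1 \<in> ball d \<rho> \<and> d2 \<in> ball d \<rho> \<and>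
        d1s \<in> subdiff q d1 \<and> d2s \<in> subdiff q d2 \<and> d1 \<noteq> d2}.
      (case p of (d1, d1s, d2, d2s) \<Rightarrow> ereal (inner (d1s - d2s) (d1 - d2) / (norm (d1 - d2))\<^sup>2)))"

lemma mu_q_at_SUP: "mu_q_at q d = (SUP \<rho>\<in>{0<..}. gq q d \<rho>)"
proof -
  have "(gq q d \<longlongrightarrow> (SUP \<rho>\<in>{0<..}. gq q d \<rho>)) (at_right 0)"
  proof (rule antitone_tendsto_SUP)
    fix x y :: real assume "0 < x" "x \<le> y"
    then have "ball d x \<subseteq> ball d y" by auto
    then show "gq q d y \<le> gq q d x" unfolding gq_def
      by (intro INF_superset_mono) auto
  qed
  then show ?thesis unfolding mu_q_at_def gq_def[symmetric]
    by (intro tendsto_Lim) (auto simp: trivial_limit_at_right_real)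
qed

lemma gq_lower:
  assumes "d1 \<in> ball d \<rho>" "d2 \<in> ball d \<rho>" "s1 \<in> subdiff q d1" "s2 \<in> subdiff q d2" "d1 \<noteq> d2"
  shows "gq q d \<rho> \<le> ereal (inner (s1 - s2) (d1 - d2) / (norm (d1 - d2))\<^sup>2)"
  unfolding gq_def
  by (rule INF_lower2[of "(d1, s1, d2, s2)"]) (use assms in auto)

lemma gq_ge:
  assumes "\<And>d1 d2 s1 s2. s1 \<in> subdiff q d1 \<Longrightarrow> s2 \<in> subdiff q d2 \<Longrightarrow>
      inner (s1 - s2) (d1 - d2) \<ge> c * (norm (d1 - d2))\<^sup>2"
  shows "gq q d \<rho> \<ge> ereal c"
  unfolding gq_def
proof (rule INF_greatest, clarify)
  fix d1 s1 d2 s2 assume h: "s1 \<in> subdiff q d1" "s2 \<in> subdiff q d2" "d1 \<noteq> d2"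
  have "(norm (d1 - d2))\<^sup>2 > 0" using h(3) by simp
  then show "ereal c \<le> ereal (inner (s1 - s2) (d1 - d2) / (norm (d1 - d2))\<^sup>2)"
    using assms[OF h(1,2)] by (simp add: pos_le_divide_eq)
qed

lemma mu_q_at_ge:
  assumes "\<And>d1 d2 s1 s2. s1 \<in> subdiff q d1 \<Longrightarrow> s2 \<in> subdiff q d2 \<Longrightarrow>
      inner (s1 - s2) (d1 - d2) \<ge> c * (norm (d1 - d2))\<^sup>2"
  shows "mu_q_at q d \<ge> ereal c"
proof -
  have "ereal c \<le> gq q d 1" by (rule gq_ge[OF assms])
  also have "\<dots> \<le> (SUP \<rho>\<in>{0<..}. gq q d \<rho>)" by (intro SUP_upper) auto
  finally show ?thesis by (simp add: mu_q_at_SUP)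
qed

lemma mu_q_at_local:
  assumes "ereal m < mu_q_at q d"
  shows "\<exists>\<rho>>0. \<forall>d1 d2 s1 s2. d1 \<in> ball d \<rho> \<longrightarrow> d2 \<in> ball d \<rho> \<longrightarrow> s1 \<in> subdiff q d1 \<longrightarrow>
      s2 \<in> subdiff q d2 \<longrightarrow> inner (s1 - s2) (d1 - d2) \<ge> m * (norm (d1 - d2))\<^sup>2"
proof -
  obtain \<rho> where \<rho>: "\<rho> > 0" "ereal m < gq q d \<rho>"
    using assms unfolding mu_q_at_SUP by (auto simp: less_SUP_iff)
  show ?thesis
  proof (intro exI[of _ \<rho>] conjI allI impI)
    show "\<rho> > 0" by (rule \<rho>(1))
    fix d1 d2 s1 s2 assume h: "d1 \<in> ball d \<rho>" "d2 \<in> ball d \<rho>" "s1 \<in> subdiff q d1" "s2 \<in> subdiff q d2"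
    show "inner (s1 - s2) (d1 - d2) \<ge> m * (norm (d1 - d2))\<^sup>2"
    proof (cases "d1 = d2")
      case True then show ?thesis by simp
    next
      case False
      have "ereal m < ereal (inner (s1 - s2) (d1 - d2) / (norm (d1 - d2))\<^sup>2)"
        using \<rho>(2) gq_lower[OF h False] by (rule less_le_trans)
      moreover have "(norm (d1 - d2))\<^sup>2 > 0" using False by simp
      ultimately show ?thesis by (simp add: pos_less_divide_eq less_imp_le)
    qed
  qed
qed


lemma coderiv_ineq:
  fixes q :: "'a::euclidean_space \<Rightarrow> ereal"
  assumes pr: "proper_fun q" and cv: "ereal_convex q" and ls: "lsc_fun q"
    and m: "0 \<le> m" and mq: "m = 0 \<or> (\<forall>d\<in>dom_sv (subdiff q). ereal m < mu_q_at q d)"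
    and cod: "U \<in> coderivative (subdiff q) x y V"
  shows "inner U V \<ge> m * (norm V)\<^sup>2"
proof -
  from cod obtain zk wk where zw: "\<And>k. zk k \<in> gph (subdiff q)"
      "\<And>k. wk k \<in> regular_normal_cone (gph (subdiff q)) (zk k)" "wk \<longlonglongrightarrow> (U, - V)"
    unfolding coderivative_def limiting_normal_cone_def by blast
  have pos: "0 \<le> inner (fst (wk k)) (- snd (wk k)) - m * (norm (snd (wk k)))\<^sup>2" for k
  proof -
    obtain d0 s0 where z: "zk k = (d0, s0)" by (cases "zk k")
    obtain a \<beta> where w: "wk k = (a, \<beta>)" by (cases "wk k")
    have s0: "s0 \<in> subdiff q d0" using zw(1)[of k] z unfolding gph_def by simp
    have "\<exists>\<rho>>0. \<forall>d s. d \<in> ball d0 \<rho> \<longrightarrow> s \<in> subdiff q d \<longrightarrow> inner (s - s0) (d - d0) \<ge> m * (norm (d - d0))\<^sup>2"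
    proof (cases "m = 0")
      case True
      then show ?thesis using subdiff_mono[OF s0] by (intro exI[of _ 1]) auto
    next
      case False
      then have "ereal m < mu_q_at q d0" using mq s0 unfolding dom_sv_def by auto
      from mu_q_at_local[OF this] obtain \<rho> where \<rho>: "\<rho> > 0"
        "\<forall>d1 d2 s1 s2. d1 \<in> ball d0 \<rho> \<longrightarrow> d2 \<in> ball d0 \<rho> \<longrightarrow> s1 \<in> subdiff q d1 \<longrightarrow>
          s2 \<in> subdiff q d2 \<longrightarrow> inner (s1 - s2) (d1 - d2) \<ge> m * (norm (d1 - d2))\<^sup>2" by blast
      show ?thesis using \<rho> s0 by (intro exI[of _ \<rho>]) auto
    qed
    then obtain \<rho> where \<rho>: "\<rho> > 0"
      "\<And>d s. d \<in> ball d0 \<rho> \<Longrightarrow> s \<in> subdiff q d \<Longrightarrow> inner (s - s0) (d - d0) \<ge> m * (norm (d - d0))\<^sup>2"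
      by blast
    have nr: "(a, \<beta>) \<in> regular_normal_cone (gph (subdiff q)) (d0, s0)"
      using zw(2)[of k] unfolding z w .
    have "inner a (- \<beta>) \<ge> m * (norm \<beta>)\<^sup>2"
      by (rule reg_normal_ineq[OF pr cv ls s0 \<rho>(1) m \<rho>(2) nr])
    then show ?thesis using w by simp
  qed
  have "((\<lambda>k. inner (fst (wk k)) (- snd (wk k)) - m * (norm (snd (wk k)))\<^sup>2) \<longlongrightarrow>
      inner (fst (U, - V)) (- snd (U, - V)) - m * (norm (snd (U, - V)))\<^sup>2) sequentially"
    by (intro tendsto_intros zw(3))
  then have "0 \<le> inner (fst (U, - V)) (- snd (U, - V)) - m * (norm (snd (U, - V)))\<^sup>2"
    by (rule tendsto_lowerbound) (use pos in auto)
  then show ?thesis by simp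
qed


lemma jac_lower:
  fixes f :: "real^'n \<Rightarrow> real^'n" and J :: "real^'n \<Rightarrow> real^'n^'n"
  assumes deriv: "(f has_derivative (\<lambda>h. J z *v h)) (at z)"
    and mono: "\<And>x1 x2. inner (f x2 - f x1) (x2 - x1) \<ge> c * (norm (x2 - x1))\<^sup>2"
  shows "inner (J z *v w) w \<ge> c * (norm w)\<^sup>2"
proof -
  define \<phi> where "\<phi> t = inner (f (z + t *\<^sub>R w)) w" for t :: real
  have g: "((\<lambda>t::real. z + t *\<^sub>R w) has_derivative (\<lambda>t. t *\<^sub>R w)) (at 0)"
    by (auto intro!: derivative_eq_intros)
  have "((\<lambda>t. f (z + t *\<^sub>R w)) has_derivative (\<lambda>t. J z *v (t *\<^sub>R w))) (at 0)"
    using has_derivative_compose[OF g] deriv by simp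
  then have "(\<phi> has_derivative (\<lambda>t. inner (J z *v (t *\<^sub>R w)) w)) (at 0)"
    unfolding \<phi>_def by (rule has_derivative_inner_left)
  moreover have "(\<lambda>t. inner (J z *v (t *\<^sub>R w)) w) = (*) (inner (J z *v w) w)"
    by (auto simp: matrix_vector_mult_scaleR algebra_simps)
  ultimately have "(\<phi> has_field_derivative (inner (J z *v w) w)) (at 0)"
    unfolding has_field_derivative_def by simp
  then have "((\<lambda>t. (\<phi> t - \<phi> 0) / (t - 0)) \<longlongrightarrow> inner (J z *v w) w) (at 0)"
    by (simp add: has_field_derivative_iff)
  then have lim: "((\<lambda>t. (\<phi> t - \<phi> 0) / (t - 0)) \<longlongrightarrow> inner (J z *v w) w) (at_right 0)"
    by (rule filterlim_mono) (auto simp: at_le)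
  show ?thesis
  proof (rule tendsto_lowerbound[OF lim])
    show "at_right (0::real) \<noteq> bot" by simp
    have "eventually (\<lambda>t. t > 0) (at_right (0::real))" by (simp add: eventually_at_right_less)
    then show "eventually (\<lambda>t. c * (norm w)\<^sup>2 \<le> (\<phi> t - \<phi> 0) / (t - 0)) (at_right 0)"
    proof eventually_elim
      case (elim t)
      have m1: "c * (norm (z + t *\<^sub>R w - z))\<^sup>2 \<le> inner (f (z + t *\<^sub>R w) - f z) (z + t *\<^sub>R w - z)"
        by (rule mono)
      have e1: "inner (f (z + t *\<^sub>R w) - f z) (z + t *\<^sub>R w - z) = t * (\<phi> t - \<phi> 0)"
        unfolding \<phi>_def by (simp add: inner_diff_left)
      have e2: "c * (norm (z + t *\<^sub>R w - z))\<^sup>2 = t * (t * (c * (norm w)\<^sup>2))"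
        using elim by (simp add: power2_eq_square algebra_simps)
      have "t * (t * (c * (norm w)\<^sup>2)) \<le> t * (\<phi> t - \<phi> 0)" using m1 by (simp only: e1 e2)
      then have "t * (c * (norm w)\<^sup>2) \<le> \<phi> t - \<phi> 0" using elim by simp
      then show ?case using elim by (simp add: pos_le_divide_eq mult.commute)
    qed
  qed
qed


lemma mu_f_at_ge:
  fixes A :: "real^'n^'n"
  assumes "\<And>w. inner (A *v w) w \<ge> c * (norm w)\<^sup>2"
  shows "mu_f_at A \<ge> c"
  unfolding mu_f_at_def
proof (rule cInf_greatest)
  show "{inner (A *v w) w |w. norm w = 1} \<noteq> {}"
    using norm_axis_1[of undefined] by blast
next
  fix y assume "y \<in> {inner (A *v w) w |w. norm w = 1}"
  then obtain w where "y = inner (A *v w) w" "norm w = 1" by blast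
  then show "c \<le> y" using assms[of w] by simp
qed

lemma mu_f_at_le:
  fixes A :: "real^'n^'n"
  shows "inner (A *v w) w \<ge> mu_f_at A * (norm w)\<^sup>2"
proof (cases "w = 0")
  case True then show ?thesis by simp
next
  case False
  define u where "u = (1 / norm w) *\<^sub>R w"
  have nu: "norm u = 1" unfolding u_def using False by simp
  obtain K where K: "\<And>x. norm (A *v x) \<le> norm x * K"
    using bounded_linear.bounded[OF matrix_vector_mul_bounded_linear[of A]] by blast
  have bb: "bdd_below {inner (A *v w) w |w. norm w = 1}"
  proof (rule bdd_belowI[of _ "- K"])
    fix y assume "y \<in> {inner (A *v w) w |w. norm w = 1}"
    then obtain v where v: "y = inner (A *v v) v" "norm v = 1" by blast
    have "\<bar>inner (A *v v) v\<bar> \<le> norm (A *v v) * norm v" by (rule Cauchy_Schwarz_ineq2)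
    also have "\<dots> \<le> K" using K[of v] v(2) by simp
    finally show "- K \<le> y" using v(1) by linarith
  qed
  have "mu_f_at A \<le> inner (A *v u) u" unfolding mu_f_at_def
    by (rule cInf_lower[OF _ bb]) (use nu in blast)
  then have "mu_f_at A * (norm w)\<^sup>2 \<le> inner (A *v u) u * (norm w)\<^sup>2"
    by (simp add: mult_right_mono)
  also have "inner (A *v u) u * (norm w)\<^sup>2 = inner (A *v w) w"
    unfolding u_def using False
    by (simp add: matrix_vector_mult_scaleR power2_eq_square)
  finally show ?thesis .
qed

lemma sym_inner:
  fixes G :: "real^'n^'n"
  assumes "transpose G = G"
  shows "inner (G *v x) y = inner x (G *v y)"
proof -
  have "inner (G *v x) y = inner (transpose G *v x) y" using assms by simp
  also have "\<dots> = inner (x v* G) y" by (simp add: transpose_matrix_vector)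
  also have "\<dots> = inner x (G *v y)" by (rule dot_lmul_matrix)
  finally show ?thesis .
qed

lemma G_norm_le:
  fixes G :: "real^'n^'n"
  assumes "onorm (\<lambda>v. G *v v) \<le> 1"
  shows "norm (G *v u) \<le> norm u"
proof -
  have "norm (G *v u) \<le> onorm (\<lambda>v. G *v v) * norm u"
    using onorm[OF matrix_vector_mul_bounded_linear[of G]] by simp
  also have "\<dots> \<le> 1 * norm u" using assms by (intro mult_right_mono) auto
  finally show ?thesis by simp
qed

lemma GG_le:
  fixes G :: "real^'n^'n"
  assumes sym: "transpose G = G" and psd: "\<And>v. inner v (G *v v) \<ge> 0"
    and nG: "onorm (\<lambda>v. G *v v) \<le> 1"
  shows "(norm (G *v u))\<^sup>2 \<le> inner (G *v u) u"
proof -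
  define a where "a = G *v u"
  define b where "b = u - a"
  have 1: "inner (G *v a) a \<le> inner a a"
  proof -
    have "inner (G *v a) a \<le> norm (G *v a) * norm a" by (rule norm_cauchy_schwarz)
    also have "\<dots> \<le> norm a * norm a" using G_norm_le[OF nG] by (intro mult_right_mono) auto
    finally show ?thesis by (simp add: dot_square_norm power2_eq_square)
  qed
  have 2: "0 \<le> inner (G *v b) b" using psd[of b] by (simp add: inner_commute)
  have Gb: "G *v b = a - G *v a" unfolding b_def a_def by (simp add: matrix_vector_mult_diff_distrib)
  have sy: "inner (G *v a) u = inner a a" using sym_inner[OF sym, of a u] unfolding a_def by simp
  have "inner (G *v u) u - (norm (G *v u))\<^sup>2 = (inner a a - inner (G *v a) a) + inner (G *v b) b"
    unfolding Gb unfolding b_def using sy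
    by (simp add: a_def inner_diff_left inner_diff_right inner_commute power2_norm_eq_inner)
  then show ?thesis using 1 2 by simp
qed


lemma rhs_bound:
  fixes G :: "real^'n^'n"
  assumes sym: "transpose G = G" and psd: "\<And>v. inner v (G *v v) \<ge> 0"
    and nG: "onorm (\<lambda>v. G *v v) \<le> 1" and g: "\<gamma> > 0"
  shows "norm ((\<gamma> *\<^sub>R (mat 1 - G) + G) *v u) \<le> max 1 \<gamma> * norm u"
proof -
  have eq: "(\<gamma> *\<^sub>R (mat 1 - G) + G) *v u = \<gamma> *\<^sub>R u + (1 - \<gamma>) *\<^sub>R (G *v u)"
  proof -
    have "(\<gamma> *\<^sub>R (mat 1 - G) + G) *v u = (\<gamma> *\<^sub>R (mat 1 - G)) *v u + G *v u"
      by (rule matrix_vector_mult_add_rdistrib)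
    also have "(\<gamma> *\<^sub>R (mat 1 - G)) *v u = \<gamma> *\<^sub>R ((mat 1 - G) *v u)"
      by (rule scaleR_matrix_vector_assoc[symmetric])
    also have "(mat 1 - G) *v u = u - G *v u"
      by (simp add: matrix_vector_mult_diff_rdistrib)
    finally show ?thesis by (simp add: algebra_simps)
  qed
  have nGu: "norm (G *v u) \<le> norm u" by (rule G_norm_le[OF nG])
  show ?thesis
  proof (cases "\<gamma> \<le> 1")
    case True
    have "norm (\<gamma> *\<^sub>R u + (1 - \<gamma>) *\<^sub>R (G *v u)) \<le> norm (\<gamma> *\<^sub>R u) + norm ((1 - \<gamma>) *\<^sub>R (G *v u))"
      by (rule norm_triangle_ineq)
    also have "\<dots> = \<gamma> * norm u + (1 - \<gamma>) * norm (G *v u)" using True g by simp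
    also have "\<dots> \<le> \<gamma> * norm u + (1 - \<gamma>) * norm u" using True nGu by (simp add: mult_left_mono)
    also have "\<dots> = norm u" by (simp add: algebra_simps)
    finally have "norm (\<gamma> *\<^sub>R u + (1 - \<gamma>) *\<^sub>R (G *v u)) \<le> norm u" .
    moreover have "max 1 \<gamma> = 1" using True by simp
    ultimately show ?thesis unfolding eq by simp
  next
    case False
    define X where "X = inner (G *v u) u"
    define Y where "Y = (norm (G *v u))\<^sup>2"
    have YX: "Y \<le> X" unfolding X_def Y_def by (rule GG_le[OF sym psd nG])
    have Y0: "0 \<le> Y" unfolding Y_def by simp
    have sq: "(norm (\<gamma> *\<^sub>R u + (1 - \<gamma>) *\<^sub>R (G *v u)))\<^sup>2 =
        \<gamma>\<^sup>2 * (norm u)\<^sup>2 + 2 * (1 - \<gamma>) * \<gamma> * X + (1 - \<gamma>)\<^sup>2 * Y"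
      unfolding norm_add_scale_sq X_def Y_def by (simp add: inner_commute power_mult_distrib)
    have g1: "\<gamma> - 1 \<ge> 0" using False by simp
    have X0: "X \<ge> 0" using YX Y0 by simp
    have "(\<gamma> - 1) * Y \<le> (\<gamma> - 1) * X" using YX g1 by (rule mult_left_mono)
    also have "\<dots> \<le> (2 * \<gamma>) * X" using _ X0 by (rule mult_right_mono) (use g in simp)
    finally have "(\<gamma> - 1) * ((\<gamma> - 1) * Y) \<le> (\<gamma> - 1) * ((2 * \<gamma>) * X)" using g1 by (rule mult_left_mono)
    then have "2 * (1 - \<gamma>) * \<gamma> * X + (1 - \<gamma>)\<^sup>2 * Y \<le> 0" by (simp add: power2_eq_square algebra_simps)
    then have "(norm (\<gamma> *\<^sub>R u + (1 - \<gamma>) *\<^sub>R (G *v u)))\<^sup>2 \<le> (\<gamma> * norm u)\<^sup>2"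
      unfolding sq by (simp add: power_mult_distrib)
    then have "norm (\<gamma> *\<^sub>R u + (1 - \<gamma>) *\<^sub>R (G *v u)) \<le> \<gamma> * norm u"
      by (rule power2_le_imp_le) (use g in simp)
    moreover have "max 1 \<gamma> = \<gamma>" using False by simp
    ultimately show ?thesis unfolding eq by simp
  qed
qed


theorem corollary4p5:
  fixes f :: "real^'n \<Rightarrow> real^'n"
    and J :: "real^'n \<Rightarrow> real^'n^'n"
    and q :: "real^'n \<Rightarrow> ereal"
    and x :: "real^'n" and \<gamma> :: real
    and G :: "real^'n^'n"
  assumes deriv: "\<And>z. (f has_derivative (\<lambda>h. J z *v h)) (at z)"
    and J_cont: "continuous_on UNIV J"
    and f_mono: "monotone_map (\<lambda>z. {f z})"
    and q_proper: "proper_fun q" and q_convex: "ereal_convex q" and q_lsc: "lsc_fun q"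
    and strong: "strongly_monotone_map (\<lambda>z. {f z}) \<or> strongly_monotone_map (subdiff q)"
    and gamma_pos: "\<gamma> > 0"
    and G_sym: "transpose G = G"
    and G_psd: "\<And>v. inner v (G *v v) \<ge> 0"
    and G_norm: "onorm (\<lambda>v. G *v v) \<le> 1"
    and G_coderiv: "\<And>v. G *v v \<in> coderivative (subdiff q)
                 (x + u_gamma f q \<gamma> x) (- \<gamma> *\<^sub>R u_gamma f q \<gamma> x - f x) ((mat 1 - G) *v v)"
  shows "(\<exists>!dx. ((mat 1 - G) ** J x + G) *v dx = (\<gamma> *\<^sub>R (mat 1 - G) + G) *v u_gamma f q \<gamma> x)
       \<and> (\<forall>dx. ((mat 1 - G) ** J x + G) *v dx = (\<gamma> *\<^sub>R (mat 1 - G) + G) *v u_gamma f q \<gamma> x \<longrightarrow>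
            ereal (norm dx) \<le>
              (1 + ereal (onorm (\<lambda>v. (J x - mat 1) *v v)) /
                     ((INF z. ereal (mu_f_at (J z))) + (INF d \<in> dom_sv (subdiff q). mu_q_at q d)))
              * ereal (max 1 \<gamma> * norm (u_gamma f q \<gamma> x)))"
proof -
  define u where "u = u_gamma f q \<gamma> x"
  define A where "A = J x"
  define M where "M = (mat 1 - G) ** A + G"
  define r where "r = (\<gamma> *\<^sub>R (mat 1 - G) + G) *v u"
  define MF where "MF = (INF z. ereal (mu_f_at (J z)))"
  define MQ where "MQ = (INF d \<in> dom_sv (subdiff q). mu_q_at q d)"
  define on where "on = onorm (\<lambda>v. (J x - mat 1) *v v)"
  define Adm where "Adm = {m. 0 \<le> m \<and> (m = 0 \<or> (\<forall>d\<in>dom_sv (subdiff q). ereal m < mu_q_at q d))}"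
  have fmono: "\<And>x1 x2. inner (f x2 - f x1) (x2 - x1) \<ge> 0 * (norm (x2 - x1))\<^sup>2"
    using f_mono unfolding monotone_map_def by auto
  have qmono: "\<And>d1 d2 s1 s2. s1 \<in> subdiff q d1 \<Longrightarrow> s2 \<in> subdiff q d2 \<Longrightarrow>
      inner (s1 - s2) (d1 - d2) \<ge> 0 * (norm (d1 - d2))\<^sup>2"
    using subdiff_mono by fastforce
  have mf_nonneg: "mu_f_at (J z) \<ge> 0" for z
    by (rule mu_f_at_ge) (rule jac_lower[OF deriv fmono])
  have MF0: "MF \<ge> 0" unfolding MF_def by (rule INF_greatest) (simp add: mf_nonneg)
  have MFle: "MF \<le> ereal (mu_f_at A)" unfolding MF_def A_def by (rule INF_lower) simp
  obtain mf where mf: "MF = ereal mf" using MF0 MFle by (cases MF) auto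
  have mf0: "0 \<le> mf" using MF0 mf by simp
  have mfA: "mf \<le> mu_f_at A" using MFle mf by simp
  have Aw: "inner (A *v w) w \<ge> mf * (norm w)\<^sup>2" for w
  proof -
    have "mf * (norm w)\<^sup>2 \<le> mu_f_at A * (norm w)\<^sup>2" using mfA by (rule mult_right_mono) simp
    also have "\<dots> \<le> inner (A *v w) w" by (rule mu_f_at_le)
    finally show ?thesis .
  qed
  have MQ0: "MQ \<ge> 0" unfolding MQ_def
  proof (rule INF_greatest)
    fix d show "0 \<le> mu_q_at q d" using mu_q_at_ge[OF qmono] by (simp add: zero_ereal_def)
  qed
  have adm0: "0 \<in> Adm" unfolding Adm_def by simp
  have admlt: "m \<in> Adm" if "0 \<le> m" "ereal m < MQ" for m
  proof -
    have "\<forall>d\<in>dom_sv (subdiff q). ereal m < mu_q_at q d"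
    proof
      fix d assume "d \<in> dom_sv (subdiff q)"
      then have "MQ \<le> mu_q_at q d" unfolding MQ_def by (rule INF_lower)
      then show "ereal m < mu_q_at q d" using that(2) by simp
    qed
    then show ?thesis unfolding Adm_def using that(1) by simp
  qed
  have strong': "mf > 0 \<or> (\<exists>\<mu>>0. MQ \<ge> ereal \<mu>)"
    using strong
  proof
    assume "strongly_monotone_map (\<lambda>z. {f z})"
    then obtain \<mu> where \<mu>: "\<mu> > 0" "\<And>x1 x2. inner (f x2 - f x1) (x2 - x1) \<ge> \<mu> * (norm (x2 - x1))\<^sup>2"
      unfolding strongly_monotone_map_def by auto
    have "mu_f_at (J z) \<ge> \<mu>" for z by (rule mu_f_at_ge) (rule jac_lower[OF deriv \<mu>(2)])
    then have "MF \<ge> ereal \<mu>" unfolding MF_def by (intro INF_greatest) simp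
    then show ?thesis using mf \<mu>(1) by simp
  next
    assume "strongly_monotone_map (subdiff q)"
    then obtain \<mu> where \<mu>: "\<mu> > 0" "\<And>x1 y1 x2 y2. y1 \<in> subdiff q x1 \<Longrightarrow> y2 \<in> subdiff q x2 \<Longrightarrow>
        inner (y2 - y1) (x2 - x1) \<ge> \<mu> * (norm (x2 - x1))\<^sup>2"
      unfolding strongly_monotone_map_def by blast
    have "mu_q_at q d \<ge> ereal \<mu>" for d
      by (rule mu_q_at_ge) (rule \<mu>(2))
    then have "MQ \<ge> ereal \<mu>" unfolding MQ_def by (intro INF_greatest) simp
    then show ?thesis using \<mu>(1) by blast
  qed
  obtain m0 where m0: "m0 \<in> Adm" "mf + m0 > 0"
  proof (cases "mf > 0")
    case True then show ?thesis using that[OF adm0] by simp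
  next
    case False
    then obtain \<mu> where \<mu>: "\<mu> > 0" "MQ \<ge> ereal \<mu>" using strong' by blast
    have "ereal (\<mu> / 2) < ereal \<mu>" using \<mu>(1) by simp
    then have "ereal (\<mu> / 2) < MQ" using \<mu>(2) by (rule less_le_trans)
    then have "\<mu> / 2 \<in> Adm" by (rule admlt[rotated]) (use \<mu>(1) in simp)
    then show ?thesis by (rule that) (use mf0 \<mu>(1) in simp)
  qed
  have key: "inner (G *v v) ((mat 1 - G) *v v) \<ge> m * (norm ((mat 1 - G) *v v))\<^sup>2" if "m \<in> Adm" for m v
  proof -
    have "0 \<le> m" "m = 0 \<or> (\<forall>d\<in>dom_sv (subdiff q). ereal m < mu_q_at q d)"
      using that unfolding Adm_def by auto
    then show ?thesis by (rule coderiv_ineq[OF q_proper q_convex q_lsc _ _ G_coderiv[of v]])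
  qed
  have Mvec: "M *v w = (mat 1 - G) *v (A *v w) + G *v w" for w
    unfolding M_def by (simp add: matrix_vector_mult_add_rdistrib matrix_vector_mul_assoc[symmetric])
  have IG: "(mat 1 - G) *v v = v - G *v v" for v
    by (simp add: matrix_vector_mult_diff_rdistrib)
  have core: "norm w * (mf + m) \<le> norm y" if m: "m \<in> Adm" and h: "M *v w = (mat 1 - G) *v y" for m w y
  proof -
    define v where "v = w - A *v w + y"
    have h': "A *v w - G *v (A *v w) + G *v w = y - G *v y" using h unfolding Mvec IG .
    have Gv: "G *v v = G *v w - G *v (A *v w) + G *v y"
      unfolding v_def by (simp add: matrix_vector_mult_diff_distrib matrix_vector_right_distrib)
    have h1: "(mat 1 - G) *v v = w" unfolding IG Gv using h' unfolding v_def
      by (simp add: algebra_simps)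
    have h2: "G *v v = y - A *v w" using h1 unfolding IG v_def by (simp add: algebra_simps)
    have "inner (y - A *v w) w \<ge> m * (norm w)\<^sup>2" using key[OF m, of v] unfolding h1 h2 .
    then have "inner y w \<ge> (mf + m) * (norm w)\<^sup>2" using Aw[of w]
      by (simp add: inner_diff_left algebra_simps)
    also have "inner y w \<le> norm y * norm w" by (rule norm_cauchy_schwarz)
    finally have fw: "norm w * ((mf + m) * norm w) \<le> norm w * norm y" by (simp add: power2_eq_square algebra_simps)
    show ?thesis
    proof (cases "norm w = 0")
      case True then show ?thesis by simp
    next
      case False
      then have "norm w > 0" by simp
      with fw have "(mf + m) * norm w \<le> norm y" by (rule mult_left_le_imp_le)
      then show ?thesis by (simp add: mult.commute)
    qed
  qed
  have inj: "w = 0" if "M *v w = 0" for w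
  proof -
    have "M *v w = (mat 1 - G) *v 0" using that by simp
    from core[OF m0(1) this] have "norm w * (mf + m0) \<le> 0" by simp
    then have "norm w \<le> 0" using m0(2) by (simp add: mult_le_0_iff)
    then show ?thesis by simp
  qed
  have injM: "inj ((*v) M)"
  proof (rule injI)
    fix a b assume "M *v a = M *v b"
    then have "M *v (a - b) = 0" by (simp add: matrix_vector_mult_diff_distrib)
    then have "a - b = 0" by (rule inj)
    then show "a = b" by simp
  qed
  have "\<exists>B. B ** M = mat 1" using injM by (simp only: matrix_left_invertible_injective)
  then obtain B where B: "B ** M = mat 1" by (elim exE)
  have MB: "M ** B = mat 1" using B by (simp only: matrix_left_right_inverse)
  have ex: "M *v (B *v r) = r" by (simp add: matrix_vector_mul_assoc MB)
  have uniq: "a = b" if "M *v a = r" "M *v b = r" for a b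
  proof -
    have "M *v (a - b) = 0" using that by (simp add: matrix_vector_mult_diff_distrib)
    then have "a - b = 0" by (rule inj)
    then show ?thesis by simp
  qed
  have on0: "on \<ge> 0" unfolding on_def by (rule onorm_pos_le[OF matrix_vector_mul_bounded_linear])
  have rb: "norm r \<le> max 1 \<gamma> * norm u" unfolding r_def by (rule rhs_bound[OF G_sym G_psd G_norm gamma_pos])
  have bound: "ereal (norm dx) \<le> (1 + ereal on / (MF + MQ)) * ereal (max 1 \<gamma> * norm u)"
    if dx: "M *v dx = r" for dx
  proof -
    define e where "e = dx - r"
    have "M *v e = M *v dx - M *v r" unfolding e_def by (simp add: matrix_vector_mult_diff_distrib)
    also have "\<dots> = r - ((mat 1 - G) *v (A *v r) + G *v r)" using dx Mvec by simp
    also have "\<dots> = (mat 1 - G) *v (r - A *v r)" unfolding IG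
      by (simp add: matrix_vector_mult_diff_distrib algebra_simps)
    finally have Me: "M *v e = (mat 1 - G) *v (r - A *v r)" .
    have yb: "norm (r - A *v r) \<le> on * norm r"
    proof -
      have "norm ((J x - mat 1) *v r) \<le> on * norm r"
        unfolding on_def by (rule onorm[OF matrix_vector_mul_bounded_linear])
      moreover have "(J x - mat 1) *v r = A *v r - r" unfolding A_def
        by (simp add: matrix_vector_mult_diff_rdistrib)
      ultimately show ?thesis by (simp add: norm_minus_commute)
    qed
    have ecore: "norm e * (mf + m) \<le> on * norm r" if "m \<in> Adm" for m
      using core[OF that Me] yb by simp
    have ndx: "norm dx \<le> norm r + norm e" unfolding e_def
      using norm_triangle_ineq[of r "dx - r"] by simp
    have K0: "0 \<le> max 1 \<gamma> * norm u" by simp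
    show ?thesis
    proof (cases MQ)
      case PInf
      have "e = 0"
      proof (rule ccontr)
        assume "e \<noteq> 0"
        then have ne: "norm e > 0" by simp
        define m where "m = on * norm r / norm e + 1"
        have m0': "0 \<le> m" unfolding m_def using on0 ne by simp
        then have "m \<in> Adm" using PInf by (rule_tac admlt) auto
        from ecore[OF this] have "norm e * mf + norm e * m \<le> on * norm r" by (simp add: algebra_simps)
        moreover have "norm e * m = on * norm r + norm e" unfolding m_def using ne by (simp add: field_simps)
        moreover have "norm e * mf \<ge> 0" using mf0 by simp
        ultimately show False using ne by simp
      qed
      then have "norm dx \<le> max 1 \<gamma> * norm u" using ndx rb by simp
      then show ?thesis using PInf mf by simp
    next
      case (real mq)
      have mq0: "mq \<ge> 0" using MQ0 real by simp
      define S where "S = mf + mq"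
      have S0: "S > 0" unfolding S_def using strong' mq0 mf0 real by auto
      have eS: "norm e * S \<le> on * norm r"
      proof (rule ccontr)
        assume "\<not> ?thesis"
        then have gap: "norm e * S - on * norm r > 0" by simp
        define gp where "gp = norm e * S - on * norm r"
        have ne: "norm e > 0"
        proof (rule ccontr)
          assume "\<not> norm e > 0" then have "norm e = 0" by simp
          then show False using gap mult_nonneg_nonneg[OF on0 norm_ge_zero[of r]] by simp
        qed
        define m where "m = max 0 (mq - gp / (2 * norm e))"
        have "m \<in> Adm"
        proof (cases "m = 0")
          case True then show ?thesis using adm0 by simp
        next
          case False
          then have "m = mq - gp / (2 * norm e)" unfolding m_def by (simp add: max_def split: if_splits)
          moreover have "gp / (2 * norm e) > 0" using gap ne unfolding gp_def by simp
          ultimately have "m < mq" by simp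
          then show ?thesis using real by (rule_tac admlt) (auto simp: m_def)
        qed
        from ecore[OF this] have "norm e * (mf + m) \<le> on * norm r" .
        moreover have "norm e * m \<ge> norm e * mq - gp / 2"
        proof -
          have "m \<ge> mq - gp / (2 * norm e)" unfolding m_def by simp
          then have "norm e * (mq - gp / (2 * norm e)) \<le> norm e * m"
            by (rule mult_left_mono) (use ne in simp)
          moreover have "norm e * (mq - gp / (2 * norm e)) = norm e * mq - gp / 2"
            using ne by (simp add: field_simps)
          ultimately show ?thesis by simp
        qed
        moreover have "norm e * (mf + m) = norm e * mf + norm e * m" by (simp add: algebra_simps)
        moreover have "norm e * S = norm e * mf + norm e * mq" unfolding S_def by (simp add: algebra_simps)
        ultimately show False using gap gp_def by linarith
      qed
      have "norm e \<le> on * norm r / S" using eS S0 by (simp add: pos_le_divide_eq)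
      then have "norm dx \<le> norm r * (1 + on / S)" using ndx by (simp add: algebra_simps)
      also have "\<dots> \<le> (max 1 \<gamma> * norm u) * (1 + on / S)"
        using rb on0 S0 by (intro mult_right_mono) auto
      finally have fin: "norm dx \<le> (1 + on / S) * (max 1 \<gamma> * norm u)" by (simp add: algebra_simps)
      have "MF + MQ = ereal S" unfolding S_def using mf real by simp
      then show ?thesis using fin S0 by (simp add: add.commute)
    next
      case MInf
      then show ?thesis using MQ0 by simp
    qed
  qed
  have part1: "\<exists>!dx. M *v dx = r" using ex uniq by blast
  from part1 bound show ?thesis
    unfolding M_def A_def r_def u_def MF_def MQ_def on_def by blast
qed

end
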